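(* Let $\kappa\ge1$ and $\alpha_1,\alpha_2\in\mathcal{A}(\kappa)$. Then $(\alpha_1\circledast_\kappa\alpha_2)(0)=\alpha_1(0)\alpha_2(0)+\sum_{l=1}^\infty(\kappa+1)\kappa^{l-1}\alpha_1(l)\alpha_2(l)$; $(\alpha_1\circledast_\kappa\alpha_2)(1)=\sum_{l=0}^\infty\kappa^l[\alpha_1(l)\alpha_2(l+1)+\alpha_1(l+1)\alpha_2(l)]$; and for $n\ge2$, $$(\alpha_1\circledast_\kappa\alpha_2)(n)=\sum_{l=0}^\infty\kappa^l[\alpha_1(l)\alpha_2(l+n)+\alpha_1(l+n)\alpha_2(l)]+\sum_{i=1}^{n-1}\alpha_1(i)\alpha_2(n-i)+\sum_{i=1}^{n-1}\sum_{l=1}^\infty(\kappa-1)\kappa^{l-1}\alpha_1(l+i)\alpha_2(l+n-i).$$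
   Context: $\mathrm{T}_\kappa=(V_\kappa,E_\kappa)$ is the Cayley tree of order $\kappa$ (infinite connected acyclic graph, every vertex of degree $\kappa+1$), $d$ its graph distance. $\mathcal{A}(\kappa)$ is the set of functions $\alpha:\mathbb{N}_0\to\mathbb{C}$ such that the kernel $T_\alpha(x,y)=\alpha(d(x,y))$ defines a bounded operator on $\ell^2(V_\kappa)$. Fix a sequence $(v_n)_{n\ge0}$ in $V_\kappa$ with $d(v_k,v_n)=|k-n|$ for all $k,n\ge0$; for $\alpha_1,\alpha_2\in\mathcal{A}(\kappa)$ define $(\alpha_1\circledast_\kappa\alpha_2)(n)=\sum_{x\in V_\kappa}\alpha_1(d(v_0,x))\alpha_2(d(x,v_n))$ for $n\ge0$ (this series converges and does not depend on the choice of $(v_n)$). *)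

theory Defs
  imports "HOL-Analysis.Analysis"
begin

definition is_walk :: "('v \<Rightarrow> 'v \<Rightarrow> bool) \<Rightarrow> 'v list \<Rightarrow> bool" where
  "is_walk E xs \<longleftrightarrow> xs \<noteq> [] \<and> (\<forall>i. Suc i < length xs \<longrightarrow> E (xs ! i) (xs ! Suc i))"

definition gdist :: "('v \<Rightarrow> 'v \<Rightarrow> bool) \<Rightarrow> 'v \<Rightarrow> 'v \<Rightarrow> nat" where
  "gdist E x y = (LEAST n. \<exists>xs. is_walk E xs \<and> length xs = Suc n \<and> hd xs = x \<and> last xs = y)"

definition cayley_tree :: "nat \<Rightarrow> ('v \<Rightarrow> 'v \<Rightarrow> bool) \<Rightarrow> bool" where
  "cayley_tree \<kappa> E \<longleftrightarrow>
     (\<forall>x y. E x y \<longrightarrow> E y x) \<and> (\<forall>x. \<not> E x x) \<and>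
     infinite (UNIV :: 'v set) \<and>
     (\<forall>x y. \<exists>xs. is_walk E xs \<and> hd xs = x \<and> last xs = y) \<and>
     (\<nexists>xs. 3 \<le> length xs \<and> distinct xs \<and> is_walk E (xs @ [hd xs])) \<and>
     (\<forall>x. finite {y. E x y} \<and> card {y. E x y} = \<kappa> + 1)"

text \<open>The kernel T(x,y) = alpha(d(x,y)) defines a bounded operator on l^2(V):
  for every f in l^2(V) the defining series converge, Tf lies in l^2(V),
  and ||Tf|| \<le> C ||f|| for a uniform constant C.\<close>
definition l2 :: "('v \<Rightarrow> complex) \<Rightarrow> bool" where
  "l2 f \<longleftrightarrow> (\<lambda>y. (norm (f y))\<^sup>2) summable_on UNIV"

definition l2norm_sq :: "('v \<Rightarrow> complex) \<Rightarrow> real" where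
  "l2norm_sq f = (\<Sum>\<^sub>\<infinity>y. (norm (f y))\<^sup>2)"

definition in_A :: "nat \<Rightarrow> ('v \<Rightarrow> 'v \<Rightarrow> bool) \<Rightarrow> (nat \<Rightarrow> complex) \<Rightarrow> bool" where
  "in_A \<kappa> E \<alpha> \<longleftrightarrow> (\<exists>C. \<forall>f. l2 f \<longrightarrow>
      (\<forall>x. (\<lambda>y. \<alpha> (gdist E x y) * f y) summable_on UNIV) \<and>
      l2 (\<lambda>x. \<Sum>\<^sub>\<infinity>y. \<alpha> (gdist E x y) * f y) \<and>
      l2norm_sq (\<lambda>x. \<Sum>\<^sub>\<infinity>y. \<alpha> (gdist E x y) * f y) \<le> C * l2norm_sq f)"

text \<open>The convolution, computed along a geodesic sequence v.\<close>
definition geodesic_seq :: "('v \<Rightarrow> 'v \<Rightarrow> bool) \<Rightarrow> (nat \<Rightarrow> 'v) \<Rightarrow> bool" where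
  "geodesic_seq E v \<longleftrightarrow> (\<forall>k n. gdist E (v k) (v n) = (if k \<le> n then n - k else k - n))"

definition tree_conv :: "('v \<Rightarrow> 'v \<Rightarrow> bool) \<Rightarrow> (nat \<Rightarrow> 'v) \<Rightarrow> (nat \<Rightarrow> complex) \<Rightarrow> (nat \<Rightarrow> complex) \<Rightarrow> nat \<Rightarrow> complex" where
  "tree_conv E v \<alpha>1 \<alpha>2 n = (\<Sum>\<^sub>\<infinity>x. \<alpha>1 (gdist E (v 0) x) * \<alpha>2 (gdist E x (v n)))"

end

theory Submission
  imports Defs
begin


definition fwalk :: "('v \<Rightarrow> 'v \<Rightarrow> bool) \<Rightarrow> (nat \<Rightarrow> 'v) \<Rightarrow> nat \<Rightarrow> bool" where
  "fwalk E w n \<longleftrightarrow> (\<forall>k<n. E (w k) (w (Suc k)))"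

lemma walk_equiv:
  "(\<exists>xs. is_walk E xs \<and> length xs = Suc n \<and> hd xs = x \<and> last xs = y) \<longleftrightarrow>
   (\<exists>w. fwalk E w n \<and> w 0 = x \<and> w n = y)"
proof
  assume "\<exists>xs. is_walk E xs \<and> length xs = Suc n \<and> hd xs = x \<and> last xs = y"
  then obtain xs where xs: "is_walk E xs" "length xs = Suc n" "hd xs = x" "last xs = y" by blast
  then have "xs \<noteq> []" by auto
  show "\<exists>w. fwalk E w n \<and> w 0 = x \<and> w n = y"
    apply (rule exI[of _ "(!) xs"])
    using xs \<open>xs \<noteq> []\<close> by (auto simp: fwalk_def is_walk_def hd_conv_nth last_conv_nth)
next
  assume "\<exists>w. fwalk E w n \<and> w 0 = x \<and> w n = y"
  then obtain w where w: "fwalk E w n" "w 0 = x" "w n = y" by blast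
  show "\<exists>xs. is_walk E xs \<and> length xs = Suc n \<and> hd xs = x \<and> last xs = y"
    apply (rule exI[of _ "map w [0..<Suc n]"])
    using w by (auto simp: fwalk_def is_walk_def hd_map last_map simp del: upt_Suc)
qed

lemma gdist_fwalk: "gdist E x y = (LEAST n. \<exists>w. fwalk E w n \<and> w 0 = x \<and> w n = y)"
  unfolding gdist_def walk_equiv ..

locale ctree =
  fixes \<kappa> :: nat and E :: "'v \<Rightarrow> 'v \<Rightarrow> bool"
  assumes ct: "cayley_tree \<kappa> E"
begin

abbreviation d where "d \<equiv> gdist E"

lemma symE: "E x y \<Longrightarrow> E y x" using ct unfolding cayley_tree_def by blast
lemma irr: "\<not> E x x" using ct unfolding cayley_tree_def by blast
lemma finN: "finite {y. E x y}" using ct unfolding cayley_tree_def by blast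
lemma cardN: "card {y. E x y} = \<kappa> + 1" using ct unfolding cayley_tree_def by blast
lemma acyc: "\<not> (3 \<le> length xs \<and> distinct xs \<and> is_walk E (xs @ [hd xs]))"
  using ct unfolding cayley_tree_def by blast

lemma conn: "\<exists>n w. fwalk E w n \<and> w 0 = x \<and> w n = y"
proof -
  obtain xs where "is_walk E xs" "hd xs = x" "last xs = y"
    using ct unfolding cayley_tree_def by blast
  moreover have "length xs = Suc (length xs - 1)" using \<open>is_walk E xs\<close> by (cases xs) (auto simp: is_walk_def)
  ultimately show ?thesis using walk_equiv[of E "length xs - 1" x y] by metis
qed

lemma geo_ex: "\<exists>w. fwalk E w (d x y) \<and> w 0 = x \<and> w (d x y) = y"
  unfolding gdist_fwalk using conn[of x y] by (rule LeastI_ex)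

lemma d_le: "fwalk E w n \<Longrightarrow> d (w 0) (w n) \<le> n"
  unfolding gdist_fwalk by (rule Least_le) blast

lemma fwalk_mono: "fwalk E w n \<Longrightarrow> m \<le> n \<Longrightarrow> fwalk E w m"
  by (auto simp: fwalk_def)

lemma d_refl[simp]: "d x x = 0"
  using d_le[of "\<lambda>_. x" 0] by (simp add: fwalk_def)

lemma d_zero: "d x y = 0 \<Longrightarrow> x = y"
  using geo_ex[of x y] by auto

lemma d_sym: "d x y = d y x"
proof -
  have *: "d b a \<le> d a b" for a b
  proof -
    obtain w where w: "fwalk E w (d a b)" "w 0 = a" "w (d a b) = b" using geo_ex by blast
    let ?w = "\<lambda>k. w (d a b - k)"
    have "fwalk E ?w (d a b)" unfolding fwalk_def
    proof (intro allI impI)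
      fix k assume k: "k < d a b"
      then have "E (w (d a b - Suc k)) (w (Suc (d a b - Suc k)))" using w(1) unfolding fwalk_def by simp
      moreover have "Suc (d a b - Suc k) = d a b - k" using k by simp
      ultimately show "E (w (d a b - k)) (w (d a b - Suc k))" using symE by simp
    qed
    from d_le[OF this] w show ?thesis by simp
  qed
  show ?thesis using *[of x y] *[of y x] by simp
qed

lemma fwalk_concat:
  assumes "fwalk E w1 a" "fwalk E w2 b" "w1 a = w2 0"
  shows "fwalk E (\<lambda>k. if k \<le> a then w1 k else w2 (k - a)) (a + b)"
  using assms unfolding fwalk_def
  apply (intro allI impI)
  subgoal for k
    by (cases "k < a"; cases "k = a") (auto simp: Suc_diff_le)
  done

lemma d_tri: "d x z \<le> d x y + d y z"
proof -
  obtain w1 where w1: "fwalk E w1 (d x y)" "w1 0 = x" "w1 (d x y) = y" using geo_ex by blast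
  obtain w2 where w2: "fwalk E w2 (d y z)" "w2 0 = y" "w2 (d y z) = z" using geo_ex by blast
  have "fwalk E (\<lambda>k. if k \<le> d x y then w1 k else w2 (k - d x y)) (d x y + d y z)"
    by (rule fwalk_concat) (use w1 w2 in auto)
  from d_le[OF this] w1 w2 show ?thesis by (cases "d y z = 0") auto
qed

lemma d_edge: "E x y \<Longrightarrow> d x y = 1"
proof -
  assume e: "E x y"
  have "fwalk E (\<lambda>k. if k = 0 then x else y) 1" using e by (simp add: fwalk_def)
  from d_le[OF this] have "d x y \<le> 1" by simp
  moreover have "d x y \<noteq> 0" using d_zero e irr by blast
  ultimately show ?thesis by simp
qed

lemma d_one: "d x y = 1 \<Longrightarrow> E x y"
  using geo_ex[of x y] by (auto simp: fwalk_def)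

lemma d_adj_le: "E x y \<Longrightarrow> d u y \<le> d u x + 1"
  using d_tri[of u y x] d_edge[of x y] by simp


lemma nb_inj:
  assumes w: "fwalk E w n" and nb: "\<And>k. k + 2 \<le> n \<Longrightarrow> w k \<noteq> w (k + 2)"
  shows "i < j \<Longrightarrow> j \<le> n \<Longrightarrow> w i \<noteq> w j"
proof (induction "j - i" arbitrary: i j rule: less_induct)
  case (less i j)
  have IH: "w i' \<noteq> w j'" if "j' - i' < j - i" "i' < j'" "j' \<le> n" for i' j'
    using less.hyps that by blast
  show ?case
  proof
    assume eq: "w i = w j"
    consider "j = Suc i" | "j = i + 2" | "j \<ge> i + 3" using less.prems by linarith
    then show False
    proof cases
      case 1
      have "E (w i) (w (Suc i))" using w less.prems 1 unfolding fwalk_def by simp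
      then show False using eq 1 irr by simp
    next
      case 2
      then show False using nb[of i] eq less.prems by simp
    next
      case 3
      define xs where "xs = map w [i..<j]"
      have len: "length xs = j - i" by (simp add: xs_def)
      have dist: "distinct xs"
        unfolding distinct_conv_nth len
      proof (intro allI impI)
        fix p q assume pq: "p < j - i" "q < j - i" "p \<noteq> q"
        have xp: "xs ! p = w (i + p)" "xs ! q = w (i + q)" using pq by (simp_all add: xs_def)
        show "xs ! p \<noteq> xs ! q"
        proof (cases "p < q")
          case True
          have "w (i + p) \<noteq> w (i + q)" by (rule IH) (use pq less.prems True in linarith)+
          then show ?thesis using xp by simp
        next
          case False
          then have "q < p" using pq by linarith
          have "w (i + q) \<noteq> w (i + p)" by (rule IH) (use pq less.prems \<open>q < p\<close> in linarith)+
          then show ?thesis using xp by simp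
        qed
      qed
      have hd: "hd xs = w j" using 3 eq by (simp add: xs_def hd_map)
      have app: "xs @ [hd xs] = map w [i..<Suc j]" using 3 hd by (simp add: xs_def)
      have "is_walk E (map w [i..<Suc j])"
        unfolding is_walk_def
      proof (intro conjI allI impI)
        show "map w [i..<Suc j] \<noteq> []" using less.prems by (simp del: upt_Suc)
        fix t assume "Suc t < length (map w [i..<Suc j])"
        then have t: "Suc t < Suc j - i" by (simp del: upt_Suc)
        then have "i + t < n" using less.prems by linarith
        then have "E (w (i + t)) (w (Suc (i + t)))" using w unfolding fwalk_def by blast
        moreover have "map w [i..<Suc j] ! t = w (i + t)" "map w [i..<Suc j] ! Suc t = w (Suc (i + t))"
          using t by (simp_all del: upt_Suc)
        ultimately show "E (map w [i..<Suc j] ! t) (map w [i..<Suc j] ! Suc t)" by simp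
      qed
      then have "is_walk E (xs @ [hd xs])" using app by simp
      moreover have "3 \<le> length xs" using len 3 by linarith
      ultimately show False using acyc[of xs] dist by blast
    qed
  qed
qed

definition geo :: "(nat \<Rightarrow> 'v) \<Rightarrow> nat \<Rightarrow> bool" where
  "geo w n \<longleftrightarrow> fwalk E w n \<and> d (w 0) (w n) = n"

lemma geo_ex': "\<exists>w. geo w (d x y) \<and> w 0 = x \<and> w (d x y) = y"
  using geo_ex[of x y] unfolding geo_def by auto

lemma geo_dist:
  assumes g: "geo w n" and k: "k \<le> n"
  shows "d (w 0) (w k) = k"
proof -
  have w: "fwalk E w n" and dn: "d (w 0) (w n) = n" using g by (auto simp: geo_def)
  have "d (w 0) (w k) \<le> k" using d_le[OF fwalk_mono[OF w k]] .
  moreover have "fwalk E (\<lambda>j. w (k + j)) (n - k)" using w k by (auto simp: fwalk_def)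
  from d_le[OF this] have "d (w k) (w n) \<le> n - k" using k by simp
  moreover have "n \<le> d (w 0) (w k) + d (w k) (w n)" using d_tri dn by metis
  ultimately show ?thesis using k by linarith
qed

lemma geo_nb:
  assumes g: "geo w n" and k: "k + 2 \<le> n"
  shows "w k \<noteq> w (k + 2)"
proof
  assume eq: "w k = w (k + 2)"
  have w: "fwalk E w n" and dn: "d (w 0) (w n) = n" using g by (auto simp: geo_def)
  let ?w = "\<lambda>j. if j \<le> k then w j else w (j + 2)"
  have "fwalk E ?w (n - 2)"
    unfolding fwalk_def
  proof (intro allI impI)
    fix j assume "j < n - 2"
    then have jn: "Suc j + 2 \<le> n" by linarith
    consider "j < k" | "j = k" | "j > k" by linarith
    then show "E (?w j) (?w (Suc j))"
    proof cases
      case 1 then show ?thesis using w jn unfolding fwalk_def by auto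
    next
      case 2
      have "E (w (k + 2)) (w (Suc (k + 2)))" using w jn 2 unfolding fwalk_def by simp
      then show ?thesis using eq 2 by simp
    next
      case 3 then show ?thesis using w jn unfolding fwalk_def by auto
    qed
  qed
  from d_le[OF this] have "d (w 0) (?w (n - 2)) \<le> n - 2" by simp
  moreover have "?w (n - 2) = w n"
  proof (cases "n - 2 \<le> k")
    case True
    then have "k = n - 2" using k by linarith
    then have "?w (n - 2) = w k" by simp
    moreover have "k + 2 = n" using k True by linarith
    ultimately show ?thesis using eq by simp
  next
    case False
    have "n - 2 + 2 = n" using k by linarith
    then show ?thesis using False by simp
  qed
  ultimately show False using dn k by simp
qed

lemma geo_walk: "geo w n \<Longrightarrow> fwalk E w n" by (simp add: geo_def)

lemma geo_edge: "geo w n \<Longrightarrow> k < n \<Longrightarrow> E (w k) (w (Suc k))"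
  by (simp add: geo_def fwalk_def)

lemma no_same:
  assumes e: "E x y" shows "d u x \<noteq> d u y"
proof
  assume eq: "d u x = d u y"
  define r where "r = d u x"
  obtain w1 where w1: "geo w1 r" "w1 0 = u" "w1 r = x" using geo_ex'[of u x] r_def by auto
  obtain w2 where w2: "geo w2 r" "w2 0 = u" "w2 r = y" using geo_ex'[of u y] r_def eq by auto
  have D1: "k \<le> r \<Longrightarrow> d u (w1 k) = k" for k using geo_dist[OF w1(1)] w1(2) by simp
  have D2: "k \<le> r \<Longrightarrow> d u (w2 k) = k" for k using geo_dist[OF w2(1)] w2(2) by simp
  have "r \<noteq> 0"
  proof
    assume "r = 0"
    then have "x = u" "y = u" using d_zero r_def eq by (auto simp: d_sym)
    then show False using e irr by simp
  qed
  define W where "W k = (if k \<le> r then w1 k else w2 (2 * r + 1 - k))" for k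
  have fw: "fwalk E W (2 * r + 1)"
    unfolding fwalk_def
  proof (intro allI impI)
    fix k assume k: "k < 2 * r + 1"
    consider "k < r" | "k = r" | "k > r" by linarith
    then show "E (W k) (W (Suc k))"
    proof cases
      case 1 then show ?thesis using geo_edge[OF w1(1)] by (simp add: W_def)
    next
      case 2 then show ?thesis using e w1 w2 by (simp add: W_def)
    next
      case 3
      define m where "m = 2 * r - k"
      have m: "m < r" "2 * r + 1 - k = Suc m" "2 * r + 1 - Suc k = m" using 3 k by (auto simp: m_def)
      then show ?thesis using 3 symE[OF geo_edge[OF w2(1) m(1)]] by (simp add: W_def)
    qed
  qed
  have nb: "W k \<noteq> W (k + 2)" if k: "k + 2 \<le> 2 * r + 1" for k
  proof -
    consider "k + 2 \<le> r" | "k + 1 = r" | "k = r" | "k > r" by linarith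
    then show ?thesis
    proof cases
      case 1 then show ?thesis using geo_nb[OF w1(1)] by (simp add: W_def)
    next
      case 2
      then have "W k = w1 k" "W (k + 2) = w2 r" by (auto simp: W_def)
      then show ?thesis using D1[of k] D2[of r] 2 by auto
    next
      case 3
      then have "W k = w1 r" "W (k + 2) = w2 (r - 1)" by (auto simp: W_def)
      then show ?thesis using D1[of r] D2[of "r - 1"] 3 \<open>r \<noteq> 0\<close> by auto
    next
      case 4
      define m where "m = 2 * r - 1 - k"
      have m: "m + 2 \<le> r" "2 * r + 1 - k = m + 2" "2 * r + 1 - (k + 2) = m" using 4 k by (auto simp: m_def)
      then show ?thesis using 4 geo_nb[OF w2(1) m(1)] by (simp add: W_def)
    qed
  qed
  have "W 0 \<noteq> W (2 * r + 1)" using nb_inj[of W "2 * r + 1" 0 "2 * r + 1", OF fw nb] by simp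
  then show False using w1 w2 by (simp add: W_def)
qed

lemma adj: "E x y \<Longrightarrow> d u y = d u x + 1 \<or> d u x = d u y + 1"
  using no_same[of x y u] d_adj_le[of x y u] d_adj_le[OF symE, of x y u] by linarith

lemma uniq_parent:
  assumes e1: "E x y1" and e2: "E x y2" and h1: "d u y1 + 1 = d u x" and h2: "d u y2 + 1 = d u x"
  shows "y1 = y2"
proof (rule ccontr)
  assume ne: "y1 \<noteq> y2"
  define r where "r = d u y1"
  have r2: "r = d u y2" using h1 h2 r_def by simp
  obtain w1 where w1: "geo w1 r" "w1 0 = u" "w1 r = y1" using geo_ex'[of u y1] r_def by auto
  obtain w2 where w2: "geo w2 r" "w2 0 = u" "w2 r = y2" using geo_ex'[of u y2] r2 by auto
  have D1: "k \<le> r \<Longrightarrow> d u (w1 k) = k" for k using geo_dist[OF w1(1)] w1(2) by simp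
  have D2: "k \<le> r \<Longrightarrow> d u (w2 k) = k" for k using geo_dist[OF w2(1)] w2(2) by simp
  have dx: "d u x = r + 1" using h1 r_def by simp
  have "r \<noteq> 0"
  proof
    assume "r = 0"
    then have "y1 = u" "y2 = u" using d_zero r_def r2 by (auto simp: d_sym)
    then show False using ne by simp
  qed
  define W where "W k = (if k \<le> r then w1 k else if k = r + 1 then x else w2 (2 * r + 2 - k))" for k
  have fw: "fwalk E W (2 * r + 2)"
    unfolding fwalk_def
  proof (intro allI impI)
    fix k assume k: "k < 2 * r + 2"
    consider "k < r" | "k = r" | "k = r + 1" | "k > r + 1" by linarith
    then show "E (W k) (W (Suc k))"
    proof cases
      case 1 then show ?thesis using geo_edge[OF w1(1)] by (simp add: W_def)
    next
      case 2 then show ?thesis using symE[OF e1] w1 by (simp add: W_def)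
    next
      case 3 
      then have "2 * r + 2 - Suc k = r" by simp
      then show ?thesis using e2 w2 3 by (simp add: W_def)
    next
      case 4
      define m where "m = 2 * r + 1 - k"
      have m: "m < r" "2 * r + 2 - k = Suc m" "2 * r + 2 - Suc k = m" using 4 k by (auto simp: m_def)
      then show ?thesis using 4 symE[OF geo_edge[OF w2(1) m(1)]] by (simp add: W_def)
    qed
  qed
  have nb: "W k \<noteq> W (k + 2)" if k: "k + 2 \<le> 2 * r + 2" for k
  proof -
    consider "k + 2 \<le> r" | "k + 1 = r" | "k = r" | "k = r + 1" | "k > r + 1" by linarith
    then show ?thesis
    proof cases
      case 1 then show ?thesis using geo_nb[OF w1(1)] by (simp add: W_def)
    next
      case 2
      then have "W k = w1 k" "W (k + 2) = x" by (auto simp: W_def)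
      then show ?thesis using D1[of k] dx 2 by auto
    next
      case 3
      then have "W k = y1" "W (k + 2) = y2" using w1 w2 by (auto simp: W_def)
      then show ?thesis using ne by auto
    next
      case 4
      then have "2 * r + 2 - (k + 2) = r - 1" by simp
      then have "W k = x" "W (k + 2) = w2 (r - 1)" using 4 by (auto simp: W_def)
      then show ?thesis using D2[of "r - 1"] dx by auto
    next
      case 5
      define m where "m = 2 * r - k"
      have m: "m + 2 \<le> r" "2 * r + 2 - k = m + 2" "2 * r + 2 - (k + 2) = m" using 5 k by (auto simp: m_def)
      then show ?thesis using 5 geo_nb[OF w2(1) m(1)] by (simp add: W_def)
    qed
  qed
  have "W 0 \<noteq> W (2 * r + 2)" using nb_inj[of W "2 * r + 2" 0 "2 * r + 2", OF fw nb] by simp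
  then show False using w1 w2 by (simp add: W_def)
qed

lemma parent_ex:
  assumes "x \<noteq> u" shows "\<exists>y. E x y \<and> d u y + 1 = d u x"
proof -
  define r where "r = d u x"
  obtain w where w: "geo w r" "w 0 = u" "w r = x" using geo_ex'[of u x] r_def by auto
  have "r \<noteq> 0" using assms d_zero r_def by blast
  then have "E (w (r - 1)) (w r)" using geo_edge[OF w(1), of "r - 1"] by simp
  then have "E x (w (r - 1))" using symE w(3) by blast
  moreover have "d u (w (r - 1)) = r - 1" using geo_dist[OF w(1), of "r - 1"] w(2) by simp
  ultimately show ?thesis using \<open>r \<noteq> 0\<close> r_def by (intro exI[of _ "w (r - 1)"]) auto
qed

definition B where "B c y h = {x. d c x = h \<and> d y x + 1 = h}"

lemma children_card:
  assumes "d c p = h + 1"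
  shows "finite {z. E p z \<and> d c z = h + 2} \<and> card {z. E p z \<and> d c z = h + 2} = \<kappa>"
proof -
  have "p \<noteq> c" using assms by auto
  then obtain q where q: "E p q" "d c q + 1 = d c p" using parent_ex[of p c] by blast
  let ?S = "{z. E p z \<and> d c z = h + 2}"
  have eq: "{z. E p z} = insert q ?S"
  proof
    show "{z. E p z} \<subseteq> insert q ?S"
    proof
      fix z assume z: "z \<in> {z. E p z}"
      then have "E p z" by simp
      from adj[OF this, of c] show "z \<in> insert q ?S"
      proof
        assume "d c z = d c p + 1" then show ?thesis using \<open>E p z\<close> assms by simp
      next
        assume "d c p = d c z + 1"
        then have "z = q" using uniq_parent[OF \<open>E p z\<close> q(1), of c] q(2) by simp
        then show ?thesis by simp
      qed
    qed
    show "insert q ?S \<subseteq> {z. E p z}" using q by auto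
  qed
  have fin: "finite ?S" using finN[of p] by (rule finite_subset[rotated]) auto
  have "q \<notin> ?S" using q assms by simp
  then have "card {z. E p z} = Suc (card ?S)" using eq fin by simp
  then show ?thesis using cardN[of p] fin by simp
qed

lemma branch_card:
  assumes e: "E c y"
  shows "finite (B c y (Suc h)) \<and> card (B c y (Suc h)) = \<kappa> ^ h"
proof (induction h)
  case 0
  have "B c y (Suc 0) = {y}"
  proof
    show "B c y (Suc 0) \<subseteq> {y}" using d_zero by (auto simp: B_def)
    show "{y} \<subseteq> B c y (Suc 0)" using d_edge[OF e] by (auto simp: B_def)
  qed
  then show ?case by simp
next
  case (Suc h)
  define C where "C p = {z. E p z \<and> d c z = h + 2}" for p
  have eq: "B c y (Suc (Suc h)) = (\<Union>p\<in>B c y (Suc h). C p)"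
  proof
    show "B c y (Suc (Suc h)) \<subseteq> (\<Union>p\<in>B c y (Suc h). C p)"
    proof
      fix z assume "z \<in> B c y (Suc (Suc h))"
      then have z: "d c z = h + 2" "d y z = h + 1" by (auto simp: B_def)
      then have "z \<noteq> y" by auto
      then obtain p where p: "E z p" "d y p + 1 = d y z" using parent_ex[of z y] by blast
      have "d c p \<le> d c y + d y p" by (rule d_tri)
      then have le: "d c p \<le> h + 1" using d_edge[OF e] p z by simp
      have "d c p = h + 1" using adj[OF p(1), of c] z le by auto
      then have "p \<in> B c y (Suc h)" using p z by (simp add: B_def)
      moreover have "z \<in> C p" using p z symE[OF p(1)] by (simp add: C_def)
      ultimately show "z \<in> (\<Union>p\<in>B c y (Suc h). C p)" by blast
    qed
    show "(\<Union>p\<in>B c y (Suc h). C p) \<subseteq> B c y (Suc (Suc h))"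
    proof
      fix z assume "z \<in> (\<Union>p\<in>B c y (Suc h). C p)"
      then obtain p where p: "d c p = Suc h" "d y p = h" "E p z" "d c z = h + 2"
        by (auto simp: B_def C_def)
      have "d c z \<le> d c y + d y z" by (rule d_tri)
      then have "d y z = h + 1" using adj[OF p(3), of y] p d_edge[OF e] by auto
      then show "z \<in> B c y (Suc (Suc h))" using p by (simp add: B_def)
    qed
  qed
  have finC: "\<forall>p\<in>B c y (Suc h). finite (C p)" and cardC: "\<forall>p\<in>B c y (Suc h). card (C p) = \<kappa>"
    using children_card by (auto simp: B_def C_def)
  have disj: "\<forall>p1\<in>B c y (Suc h). \<forall>p2\<in>B c y (Suc h). p1 \<noteq> p2 \<longrightarrow> C p1 \<inter> C p2 = {}"
  proof (intro ballI impI)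
    fix p1 p2 assume p: "p1 \<in> B c y (Suc h)" "p2 \<in> B c y (Suc h)" "p1 \<noteq> p2"
    show "C p1 \<inter> C p2 = {}"
    proof (rule ccontr)
      assume "C p1 \<inter> C p2 \<noteq> {}"
      then obtain z where z: "E p1 z" "E p2 z" "d c z = h + 2" by (auto simp: C_def)
      then show False using uniq_parent[OF symE[OF z(1)] symE[OF z(2)], of c] p by (auto simp: B_def)
    qed
  qed
  have "card (B c y (Suc (Suc h))) = (\<Sum>p\<in>B c y (Suc h). card (C p))"
    unfolding eq using Suc.IH finC disj by (intro card_UN_disjoint) auto
  also have "\<dots> = \<kappa> ^ h * \<kappa>" using cardC Suc.IH by simp
  finally show ?case using eq Suc.IH finC by (simp add: mult.commute)
qed

lemma branch_union_card:
  assumes Y: "Y \<subseteq> {y. E c y}"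
  shows "finite (\<Union>y\<in>Y. B c y (Suc h)) \<and> card (\<Union>y\<in>Y. B c y (Suc h)) = card Y * \<kappa> ^ h"
proof -
  have finY: "finite Y" using finN[of c] Y by (rule finite_subset[rotated])
  have fin: "\<forall>y\<in>Y. finite (B c y (Suc h))" using branch_card Y by blast
  have disj: "\<forall>y1\<in>Y. \<forall>y2\<in>Y. y1 \<noteq> y2 \<longrightarrow> B c y1 (Suc h) \<inter> B c y2 (Suc h) = {}"
  proof (intro ballI impI)
    fix y1 y2 assume y: "y1 \<in> Y" "y2 \<in> Y" "y1 \<noteq> y2"
    show "B c y1 (Suc h) \<inter> B c y2 (Suc h) = {}"
    proof (rule ccontr)
      assume "B c y1 (Suc h) \<inter> B c y2 (Suc h) \<noteq> {}"
      then obtain x where "d c x = Suc h" "d y1 x + 1 = Suc h" "d y2 x + 1 = Suc h" by (auto simp: B_def)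
      then show False using uniq_parent[of c y1 y2 x] y Y by (auto simp: d_sym)
    qed
  qed
  have "card (\<Union>y\<in>Y. B c y (Suc h)) = (\<Sum>y\<in>Y. card (B c y (Suc h)))"
    using finY fin disj by (intro card_UN_disjoint) auto
  also have "\<dots> = card Y * \<kappa> ^ h"
  proof -
    have "\<forall>y\<in>Y. card (B c y (Suc h)) = \<kappa> ^ h" using branch_card Y by blast
    then show ?thesis by simp
  qed
  finally show ?thesis using finY fin by simp
qed

lemma up:
  assumes GS: "\<And>k m. k \<le> n \<Longrightarrow> m \<le> n \<Longrightarrow> d (v k) (v m) = (if k \<le> m then m - k else k - m)"
    and j: "j \<le> n" and mn: "\<And>k. k \<le> n \<Longrightarrow> d x (v j) \<le> d x (v k)"
  shows "j + t \<le> n \<Longrightarrow> d x (v (j + t)) = d x (v j) + t"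
proof -
  have "j + t \<le> n \<longrightarrow> (\<forall>s\<le>t. d x (v (j + s)) = d x (v j) + s)"
  proof (induction t)
    case 0 then show ?case by simp
  next
    case (Suc t)
    show ?case
    proof (intro impI allI)
      fix s assume jt: "j + Suc t \<le> n" and s: "s \<le> Suc t"
      then have IH: "\<And>s. s \<le> t \<Longrightarrow> d x (v (j + s)) = d x (v j) + s" using Suc by auto
      have "d x (v (j + Suc t)) = d x (v j) + Suc t"
      proof -
        let ?a = "v (j + t)" and ?b = "v (j + Suc t)"
        have eab: "E ?a ?b" using GS[of "j + t" "j + Suc t"] jt d_one by simp
        from adj[OF eab, of x] show ?thesis
        proof
          assume "d x ?b = d x ?a + 1" then show ?thesis using IH[of t] by simp
        next
          assume b: "d x ?a = d x ?b + 1"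
          show ?thesis
          proof (cases t)
            case 0
            then show ?thesis using b mn[of "j + 1"] jt by simp
          next
            case (Suc t')
            let ?c = "v (j + t')"
            have eac: "E ?a ?c" using GS[of "j + t" "j + t'"] jt Suc d_one by simp
            have "d x ?c + 1 = d x ?a" using IH[of t'] IH[of t] Suc by simp
            then have "?c = ?b" using uniq_parent[OF eac eab, of x] b by simp
            moreover have "d ?c ?b = 2" using GS[of "j + t'" "j + Suc t"] jt Suc by simp
            ultimately show ?thesis by simp
          qed
        qed
      qed
      then show "d x (v (j + s)) = d x (v j) + s" using IH s by (cases "s = Suc t") auto
    qed
  qed
  then show "j + t \<le> n \<Longrightarrow> d x (v (j + t)) = d x (v j) + t" by blast
qed

end

lemma ex_min_nat: "\<exists>j\<le>(n::nat). \<forall>k\<le>n. (f j :: nat) \<le> f k"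
proof (induction n)
  case 0 then show ?case by simp
next
  case (Suc n)
  then obtain j where j: "j \<le> n" "\<forall>k\<le>n. f j \<le> f k" by blast
  show ?case
  proof (cases "f (Suc n) < f j")
    case True then show ?thesis using j by (intro exI[of _ "Suc n"]) (auto simp: le_Suc_eq)
  next
    case False then show ?thesis using j by (intro exI[of _ j]) (auto simp: le_Suc_eq)
  qed
qed

locale cseg = ctree \<kappa> E for \<kappa> and E :: "'v \<Rightarrow> 'v \<Rightarrow> bool" +
  fixes n :: nat and v :: "nat \<Rightarrow> 'v"
  assumes GS: "\<And>k m. k \<le> n \<Longrightarrow> m \<le> n \<Longrightarrow> gdist E (v k) (v m) = (if k \<le> m then m - k else k - m)"
begin

lemma profile: "\<exists>j h. j \<le> n \<and> (\<forall>k\<le>n. d x (v k) = h + (if k \<le> j then j - k else k - j))"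
proof -
  obtain j where j: "j \<le> n" "\<forall>k\<le>n. d x (v j) \<le> d x (v k)" using ex_min_nat[of n "\<lambda>k. d x (v k)"] by blast
  let ?h = "d x (v j)"
  have "\<forall>k\<le>n. d x (v k) = ?h + (if k \<le> j then j - k else k - j)"
  proof (intro allI impI)
    fix k assume k: "k \<le> n"
    show "d x (v k) = ?h + (if k \<le> j then j - k else k - j)"
    proof (cases "k \<le> j")
      case False
      then show ?thesis using up[OF GS j(1), of x "k - j"] j k by simp
    next
      case True
      let ?v = "\<lambda>k. v (n - k)"
      have GS': "d (?v a) (?v b) = (if a \<le> b then b - a else a - b)" if "a \<le> n" "b \<le> n" for a b
        using GS[of "n - a" "n - b"] that by auto
      have mn': "d x (?v (n - j)) \<le> d x (?v k)" if "k \<le> n" for k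
        using j that by simp
      have "d x (?v (n - j + (j - k))) = d x (?v (n - j)) + (j - k)"
        by (rule up[of n ?v "n - j" x "j - k", OF GS' _ mn']) (use True j k in auto)
      moreover have "n - (n - j + (j - k)) = k" "n - (n - j) = j" using True j k by auto
      ultimately show ?thesis using True by simp
    qed
  qed
  then show ?thesis using j by blast
qed

lemma vE: "k < n \<Longrightarrow> E (v k) (v (Suc k))" using GS[of k "Suc k"] d_one by simp
lemma vE': "0 < k \<Longrightarrow> k \<le> n \<Longrightarrow> E (v k) (v (k - 1))" using GS[of k "k - 1"] d_one by simp

definition F where "F a b = {x. d (v 0) x = a \<and> d (v n) x = b}"
definition prof where "prof j h = {x. \<forall>k\<le>n. d x (v k) = h + (if k \<le> j then j - k else k - j)}"
definition Y where "Y j = {y. E (v j) y \<and> (0 < j \<longrightarrow> y \<noteq> v (j - 1)) \<and> (j < n \<longrightarrow> y \<noteq> v (j + 1))}"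

lemma F_eq:
  assumes j: "j \<le> n" shows "F (h + j) (h + n - j) = prof j h"
proof
  show "F (h + j) (h + n - j) \<subseteq> prof j h"
  proof
    fix x assume x: "x \<in> F (h + j) (h + n - j)"
    obtain j' h' where p: "j' \<le> n" "\<forall>k\<le>n. d x (v k) = h' + (if k \<le> j' then j' - k else k - j')"
      using profile by blast
    have "d x (v 0) = h' + j'" "d x (v n) = h' + (n - j')" using p by auto
    moreover have "d x (v 0) = h + j" "d x (v n) = h + n - j" using x by (auto simp: F_def d_sym)
    ultimately have "j' = j" "h' = h" using j p(1) by linarith+
    then show "x \<in> prof j h" using p by (simp add: prof_def)
  qed
  show "prof j h \<subseteq> F (h + j) (h + n - j)"
  proof
    fix x assume "x \<in> prof j h"
    then have p: "\<forall>k\<le>n. d x (v k) = h + (if k \<le> j then j - k else k - j)" by (simp add: prof_def)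
    have "d x (v 0) = h + j" using p[rule_format, of 0] by simp
    moreover have "d x (v n) = h + (n - j)" using p[rule_format, of n] j by (cases "n = j") auto
    ultimately have "d x (v 0) = h + j" "d x (v n) = h + (n - j)" by auto
    then show "x \<in> F (h + j) (h + n - j)" using j by (simp add: F_def d_sym)
  qed
qed

lemma F_empty:
  assumes "\<not> (\<exists>j h. j \<le> n \<and> a = h + j \<and> b = h + n - j)" shows "F a b = {}"
proof (rule ccontr)
  assume "F a b \<noteq> {}"
  then obtain x where x: "d (v 0) x = a" "d (v n) x = b" by (auto simp: F_def)
  obtain j' h' where p: "j' \<le> n" "\<forall>k\<le>n. d x (v k) = h' + (if k \<le> j' then j' - k else k - j')"
    using profile by blast
  have "d x (v 0) = h' + j'" "d x (v n) = h' + (n - j')" using p by auto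
  then have "a = h' + j'" "b = h' + n - j'" using x p(1) by (auto simp: d_sym)
  then show False using assms p(1) by blast
qed

lemma prof_local:
  assumes j: "j \<le> n"
  shows "prof j h = {x. d x (v j) = h \<and> (0 < j \<longrightarrow> d x (v (j - 1)) = h + 1) \<and> (j < n \<longrightarrow> d x (v (j + 1)) = h + 1)}"
proof
  show "prof j h \<subseteq> {x. d x (v j) = h \<and> (0 < j \<longrightarrow> d x (v (j - 1)) = h + 1) \<and> (j < n \<longrightarrow> d x (v (j + 1)) = h + 1)}"
  proof
    fix x assume x: "x \<in> prof j h"
    then have p: "\<forall>k\<le>n. d x (v k) = h + (if k \<le> j then j - k else k - j)" by (simp add: prof_def)
    have "d x (v j) = h" using p[rule_format, of j] j by simp
    moreover have "0 < j \<longrightarrow> d x (v (j - 1)) = h + 1" using p[rule_format, of "j - 1"] j by simp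
    moreover have "j < n \<longrightarrow> d x (v (j + 1)) = h + 1" using p[rule_format, of "j + 1"] by simp
    ultimately show "x \<in> {x. d x (v j) = h \<and> (0 < j \<longrightarrow> d x (v (j - 1)) = h + 1) \<and> (j < n \<longrightarrow> d x (v (j + 1)) = h + 1)}"
      by simp
  qed
  show "{x. d x (v j) = h \<and> (0 < j \<longrightarrow> d x (v (j - 1)) = h + 1) \<and> (j < n \<longrightarrow> d x (v (j + 1)) = h + 1)} \<subseteq> prof j h"
  proof
    fix x assume x: "x \<in> {x. d x (v j) = h \<and> (0 < j \<longrightarrow> d x (v (j - 1)) = h + 1) \<and> (j < n \<longrightarrow> d x (v (j + 1)) = h + 1)}"
    obtain j' h' where p: "j' \<le> n" "\<forall>k\<le>n. d x (v k) = h' + (if k \<le> j' then j' - k else k - j')"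
      using profile by blast
    have "j' = j"
    proof (rule ccontr)
      assume "j' \<noteq> j"
      then consider "j' < j" | "j < j'" by linarith
      then show False
      proof cases
        case 1
        then have "d x (v j) = h' + (j - j')" "d x (v (j - 1)) = h' + (j - 1 - j')"
          using p j by auto
        then show False using x 1 by auto
      next
        case 2
        then have "d x (v j) = h' + (j' - j)" "d x (v (j + 1)) = h' + (j' - (j + 1))"
          using p j by auto
        then show False using x 2 p(1) by auto
      qed
    qed
    moreover have "h' = h" using p x j \<open>j' = j\<close> by auto
    ultimately show "x \<in> prof j h" using p by (simp add: prof_def)
  qed
qed

lemma Y_card:
  assumes j: "j \<le> n"
  shows "card (Y j) = \<kappa> + 1 - (if 0 < j then 1 else 0) - (if j < n then 1 else 0)"
proof -
  define X where "X = (if 0 < j then {v (j - 1)} else {}) \<union> (if j < n then {v (j + 1)} else {})"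
  have Yeq: "Y j = {y. E (v j) y} - X" by (auto simp: Y_def X_def)
  have XN: "X \<subseteq> {y. E (v j) y}" using vE vE' j by (auto simp: X_def)
  have ne: "v (j - 1) \<noteq> v (j + 1)" if "0 < j" "j < n"
  proof -
    have "d (v (j - 1)) (v (j + 1)) = 2" using GS[of "j - 1" "j + 1"] that by auto
    then show ?thesis by auto
  qed
  have cX: "card X = (if 0 < j then 1 else 0) + (if j < n then 1 else 0)"
    using ne by (auto simp: X_def)
  have "card (Y j) = card {y. E (v j) y} - card X"
    unfolding Yeq by (rule card_Diff_subset[OF _ XN]) (simp add: X_def)
  then show ?thesis using cX cardN by simp
qed

lemma prof_card:
  assumes j: "j \<le> n"
  shows "finite (prof j h) \<and> card (prof j h) = (if h = 0 then 1 else card (Y j) * \<kappa> ^ (h - 1))"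
proof (cases h)
  case 0
  have "prof j 0 = {v j}"
  proof
    show "prof j 0 \<subseteq> {v j}" using d_zero j by (auto simp: prof_local d_sym)
    show "{v j} \<subseteq> prof j 0" using j GS[of j "j - 1"] GS[of j "j + 1"] by (auto simp: prof_local)
  qed
  then show ?thesis using 0 by simp
next
  case (Suc h0)
  have YN: "Y j \<subseteq> {y. E (v j) y}" by (auto simp: Y_def)
  have "prof j (Suc h0) = (\<Union>y\<in>Y j. B (v j) y (Suc h0))"
  proof
    show "prof j (Suc h0) \<subseteq> (\<Union>y\<in>Y j. B (v j) y (Suc h0))"
    proof
      fix x assume "x \<in> prof j (Suc h0)"
      then have x: "d x (v j) = Suc h0" "0 < j \<longrightarrow> d x (v (j - 1)) = Suc h0 + 1"
        "j < n \<longrightarrow> d x (v (j + 1)) = Suc h0 + 1" using j by (auto simp: prof_local)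
      then have "v j \<noteq> x" by auto
      then obtain y where y: "E (v j) y" "d x y + 1 = d x (v j)" using parent_ex[of "v j" x] by blast
      have "y \<in> Y j" using y x by (auto simp: Y_def)
      moreover have "x \<in> B (v j) y (Suc h0)" using y x by (simp add: B_def d_sym)
      ultimately show "x \<in> (\<Union>y\<in>Y j. B (v j) y (Suc h0))" by blast
    qed
    show "(\<Union>y\<in>Y j. B (v j) y (Suc h0)) \<subseteq> prof j (Suc h0)"
    proof
      fix x assume "x \<in> (\<Union>y\<in>Y j. B (v j) y (Suc h0))"
      then obtain y where y: "y \<in> Y j" "d (v j) x = Suc h0" "d y x + 1 = Suc h0" by (auto simp: B_def)
      have ey: "E (v j) y" using y by (simp add: Y_def)
      have c1: "d x (v (j - 1)) = Suc h0 + 1" if "0 < j"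
      proof -
        have e: "E (v j) (v (j - 1))" using vE' that j by simp
        from adj[OF e, of x] show ?thesis
        proof
          assume "d x (v j) = d x (v (j - 1)) + 1"
          then have "v (j - 1) = y" using uniq_parent[OF e ey, of x] y by (simp add: d_sym)
          then show ?thesis using y that by (simp add: Y_def)
        qed (use y in \<open>simp add: d_sym\<close>)
      qed
      have c2: "d x (v (j + 1)) = Suc h0 + 1" if "j < n"
      proof -
        have e: "E (v j) (v (j + 1))" using vE that by simp
        from adj[OF e, of x] show ?thesis
        proof
          assume "d x (v j) = d x (v (j + 1)) + 1"
          then have "v (j + 1) = y" using uniq_parent[OF e ey, of x] y by (simp add: d_sym)
          then show ?thesis using y that by (simp add: Y_def)
        qed (use y in \<open>simp add: d_sym\<close>)
      qed
      show "x \<in> prof j (Suc h0)" using c1 c2 y j by (simp add: prof_local d_sym)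
    qed
  qed
  then show ?thesis using branch_union_card[OF YN, of h0] Suc by simp
qed

end


lemma fiber_sum:
  fixes g :: "'a \<Rightarrow> complex" and \<tau> :: "'a \<Rightarrow> 'k"
  assumes sg: "g summable_on UNIV" and fin: "\<And>k. finite (\<tau> -` {k})" and gG: "\<And>x. g x = G (\<tau> x)"
  shows "((\<lambda>k. of_nat (card (\<tau> -` {k})) * G k) has_sum infsum g UNIV) UNIV"
proof -
  have hs: "(g has_sum infsum g UNIV) UNIV" using sg by simp
  have bij: "bij_betw (\<lambda>x. (\<tau> x, x)) UNIV (Sigma UNIV (\<lambda>k. \<tau> -` {k}))"
    by (rule bij_betwI[of _ _ _ snd]) auto
  have "((\<lambda>(k, x). g x) has_sum infsum g UNIV) (Sigma UNIV (\<lambda>k. \<tau> -` {k}))"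
    using has_sum_reindex_bij_betw[OF bij, of "\<lambda>(k, x). g x"] hs by simp
  moreover have "((\<lambda>y. (\<lambda>(k, x). g x) (k, y)) has_sum (of_nat (card (\<tau> -` {k})) * G k)) (\<tau> -` {k})" for k
  proof -
    have "sum g (\<tau> -` {k}) = of_nat (card (\<tau> -` {k})) * G k"
      using gG by simp
    then show ?thesis using has_sum_finite[OF fin[of k], of g] by simp
  qed
  ultimately show ?thesis by (rule has_sum_Sigma')
qed

lemma suminf_of_summable_on:
  fixes f :: "nat \<Rightarrow> complex"
  assumes "f summable_on UNIV"
  shows "summable f \<and> infsum f UNIV = suminf f"
proof -
  have "f sums infsum f UNIV" using assms by (intro has_sum_imp_sums) simp
  then show ?thesis by (simp add: sums_iff)
qed

lemma main_sum:
  fixes N :: "nat \<times> nat \<Rightarrow> nat" and G :: "nat \<times> nat \<Rightarrow> complex" and M :: "nat \<Rightarrow> nat \<Rightarrow> nat"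
  assumes hs: "((\<lambda>k. of_nat (N k) * G k) has_sum S) UNIV"
    and zero: "\<And>a b. \<not> (\<exists>j h. j \<le> n \<and> a = h + j \<and> b = h + n - j) \<Longrightarrow> N (a, b) = 0"
    and val: "\<And>j h. j \<le> n \<Longrightarrow> N (h + j, h + n - j) = M j h"
  shows "S = (\<Sum>j\<le>n. \<Sum>l. of_nat (M j l) * G (l + j, l + n - j)) \<and>
    (\<forall>j\<le>n. summable (\<lambda>l. of_nat (M j l) * G (l + j, l + n - j)))"
proof -
  define f where "f k = of_nat (N k) * G k" for k
  define \<phi> where "\<phi> = (\<lambda>(j, h). (h + j, h + n - j))"
  define A where "A = Sigma {..n} (\<lambda>_. (UNIV :: nat set))"
  have hsI: "(f has_sum S) (\<phi> ` A)"
  proof -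
    have "(f has_sum S) UNIV" using hs by (simp add: f_def[abs_def])
    moreover have "f x = 0" if "x \<in> UNIV - \<phi> ` A" for x
    proof -
      obtain a b where x: "x = (a, b)" by (cases x)
      have "\<not> (\<exists>j h. j \<le> n \<and> a = h + j \<and> b = h + n - j)"
        using that x by (auto simp: \<phi>_def A_def image_iff)
      then show ?thesis using zero x by (simp add: f_def)
    qed
    ultimately show ?thesis by (subst has_sum_cong_neutral[of _ _ f]) auto
  qed
  have inj: "inj_on \<phi> A"
    unfolding inj_on_def \<phi>_def A_def by auto
  have hsA: "((f \<circ> \<phi>) has_sum S) A" using hsI has_sum_reindex[OF inj] by blast
  have fphi: "(f \<circ> \<phi>) (j, h) = of_nat (M j h) * G (h + j, h + n - j)" if "j \<le> n" for j h
    using val[OF that] by (simp add: f_def \<phi>_def)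
  have sA: "(f \<circ> \<phi>) summable_on A" using hsA by (rule has_sum_imp_summable)
  have slice: "(\<lambda>l. of_nat (M j l) * G (l + j, l + n - j)) summable_on UNIV" if j: "j \<le> n" for j
  proof -
    have "(f \<circ> \<phi>) summable_on (Pair j ` UNIV)"
      by (rule summable_on_subset_banach[OF sA]) (use j in \<open>auto simp: A_def\<close>)
    then have "((f \<circ> \<phi>) \<circ> Pair j) summable_on UNIV"
      by (subst (asm) summable_on_reindex) (auto simp: inj_on_def)
    then show ?thesis using fphi[OF j] by (simp add: o_def)
  qed
  have hsl: "((\<lambda>y. (f \<circ> \<phi>) (j, y)) has_sum (\<Sum>l. of_nat (M j l) * G (l + j, l + n - j))) UNIV"
    if j: "j \<in> {..n}" for j
  proof -
    have "(\<lambda>y. (f \<circ> \<phi>) (j, y)) = (\<lambda>l. of_nat (M j l) * G (l + j, l + n - j))"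
      using fphi j by auto
    moreover have "((\<lambda>l. of_nat (M j l) * G (l + j, l + n - j)) has_sum
       (\<Sum>l. of_nat (M j l) * G (l + j, l + n - j))) UNIV"
    proof -
      have sj: "(\<lambda>l. of_nat (M j l) * G (l + j, l + n - j)) summable_on UNIV" using slice j by simp
      have "((\<lambda>l. of_nat (M j l) * G (l + j, l + n - j)) has_sum
         infsum (\<lambda>l. of_nat (M j l) * G (l + j, l + n - j)) UNIV) UNIV" using has_sum_infsum[OF sj] .
      then show ?thesis using suminf_of_summable_on[OF sj] by simp
    qed
    ultimately show ?thesis by simp
  qed
  have "((\<lambda>j. \<Sum>l. of_nat (M j l) * G (l + j, l + n - j)) has_sum S) {..n}"
    by (rule has_sum_Sigma'[OF hsA[unfolded A_def]]) (use hsl in simp)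
  moreover have "((\<lambda>j. \<Sum>l. of_nat (M j l) * G (l + j, l + n - j)) has_sum
     (\<Sum>j\<le>n. \<Sum>l. of_nat (M j l) * G (l + j, l + n - j))) {..n}"
    by (rule has_sum_finite) simp
  ultimately have "S = (\<Sum>j\<le>n. \<Sum>l. of_nat (M j l) * G (l + j, l + n - j))"
    by (rule has_sum_unique)
  moreover have "\<forall>j\<le>n. summable (\<lambda>l. of_nat (M j l) * G (l + j, l + n - j))"
    using slice suminf_of_summable_on by blast
  ultimately show ?thesis by blast
qed



lemma inA_col:
  assumes "in_A \<kappa> E \<alpha>"
  shows "(\<lambda>x. (norm (\<alpha> (gdist E x y)))\<^sup>2) summable_on UNIV"
proof -
  obtain C where C: "\<And>f. l2 f \<Longrightarrow> l2 (\<lambda>x. \<Sum>\<^sub>\<infinity>y. \<alpha> (gdist E x y) * f y)"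
    using assms unfolding in_A_def by blast
  define f :: "_ \<Rightarrow> complex" where "f = (\<lambda>y'. if y' = y then 1 else 0)"
  have "l2 f" unfolding l2_def
    by (rule finite_nonzero_values_imp_summable_on) (simp add: f_def)
  from C[OF this] have *: "l2 (\<lambda>x. \<Sum>\<^sub>\<infinity>y'. \<alpha> (gdist E x y') * f y')" .
  have "(\<Sum>\<^sub>\<infinity>y'. \<alpha> (gdist E x y') * f y') = \<alpha> (gdist E x y)" for x
  proof -
    have "(\<Sum>\<^sub>\<infinity>y'. \<alpha> (gdist E x y') * f y') = (\<Sum>\<^sub>\<infinity>y'\<in>{y}. \<alpha> (gdist E x y') * f y')"
      by (rule infsum_cong_neutral) (auto simp: f_def)
    then show ?thesis by (simp add: f_def)
  qed
  then show ?thesis using * by (simp add: l2_def)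
qed

lemma prod_summable:
  fixes a b :: "'a \<Rightarrow> complex"
  assumes "(\<lambda>x. (norm (a x))\<^sup>2) summable_on UNIV" "(\<lambda>x. (norm (b x))\<^sup>2) summable_on UNIV"
  shows "(\<lambda>x. a x * b x) summable_on UNIV"
proof -
  have s: "(\<lambda>x. (norm (a x))\<^sup>2 + (norm (b x))\<^sup>2) summable_on UNIV"
    using assms by (rule summable_on_add)
  have bnd: "norm (a x * b x) \<le> (norm (a x))\<^sup>2 + (norm (b x))\<^sup>2" for x
  proof -
    have "2 * (norm (a x) * norm (b x)) \<le> (norm (a x))\<^sup>2 + (norm (b x))\<^sup>2"
      using sum_squares_bound[of "norm (a x)" "norm (b x)"] by (simp add: mult.assoc)
    moreover have "0 \<le> norm (a x) * norm (b x)" by simp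
    moreover have "norm (a x * b x) = norm (a x) * norm (b x)" by (simp add: norm_mult)
    ultimately show ?thesis by linarith
  qed
  have "(\<lambda>x. norm (a x * b x)) summable_on UNIV"
    using Infinite_Sum.abs_summable_on_comparison_test'[where f="\<lambda>x. a x * b x", OF s bnd] by simp
  then show ?thesis using summable_on_iff_abs_summable_on_complex by blast
qed

lemma split_head': "summable (f :: nat \<Rightarrow> complex) \<Longrightarrow> suminf f = f 0 + (\<Sum>l. f (Suc l))"
  using suminf_split_head[of f] by simp

lemma pow_helper: "(if l = 0 then 1 else (k::nat) * k ^ (l - 1)) = k ^ l"
  by (cases l) auto

theorem lemma2p1:
  fixes \<kappa> :: nat and E :: "'v \<Rightarrow> 'v \<Rightarrow> bool" and v :: "nat \<Rightarrow> 'v"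
    and \<alpha>1 \<alpha>2 :: "nat \<Rightarrow> complex"
  assumes "\<kappa> \<ge> 1" and "cayley_tree \<kappa> E"
    and "in_A \<kappa> E \<alpha>1" and "in_A \<kappa> E \<alpha>2"
    and "geodesic_seq E v"
  shows "tree_conv E v \<alpha>1 \<alpha>2 0 =
           \<alpha>1 0 * \<alpha>2 0 + (\<Sum>l. of_nat ((\<kappa> + 1) * \<kappa> ^ l) * \<alpha>1 (l + 1) * \<alpha>2 (l + 1)) \<and>
         tree_conv E v \<alpha>1 \<alpha>2 1 =
           (\<Sum>l. of_nat (\<kappa> ^ l) * (\<alpha>1 l * \<alpha>2 (l + 1) + \<alpha>1 (l + 1) * \<alpha>2 l)) \<and>
         (\<forall>n\<ge>2. tree_conv E v \<alpha>1 \<alpha>2 n =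
           (\<Sum>l. of_nat (\<kappa> ^ l) * (\<alpha>1 l * \<alpha>2 (l + n) + \<alpha>1 (l + n) * \<alpha>2 l))
         + (\<Sum>i=1..n-1. \<alpha>1 i * \<alpha>2 (n - i))
         + (\<Sum>i=1..n-1. (\<Sum>l. of_nat ((\<kappa> - 1) * \<kappa> ^ l) * \<alpha>1 (l + 1 + i) * \<alpha>2 (l + 1 + n - i))))"
proof -
  interpret ctree \<kappa> E by unfold_locales (rule assms(2))
  have GSall: "gdist E (v k) (v m) = (if k \<le> m then m - k else k - m)" for k m
    using assms(5) unfolding geodesic_seq_def by blast
  define G :: "nat \<times> nat \<Rightarrow> complex" where "G = (\<lambda>(a, b). \<alpha>1 a * \<alpha>2 b)"
  define M where "M n j l = (if l = 0 then 1 else (\<kappa> + 1 - (if 0 < j then 1 else 0) - (if j < n then 1 else 0)) * \<kappa> ^ (l - 1))" for n j l :: nat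
  have key: "tree_conv E v \<alpha>1 \<alpha>2 n = (\<Sum>j\<le>n. \<Sum>l. of_nat (M n j l) * G (l + j, l + n - j)) \<and>
     (\<forall>j\<le>n. summable (\<lambda>l. of_nat (M n j l) * G (l + j, l + n - j)))" for n
  proof -
    interpret cseg \<kappa> E n v by unfold_locales (rule GSall)
    define g where "g x = \<alpha>1 (d (v 0) x) * \<alpha>2 (d x (v n))" for x
    define \<tau> where "\<tau> x = (d (v 0) x, d (v n) x)" for x
    have sg: "g summable_on UNIV"
    proof -
      have "(\<lambda>x. (norm (\<alpha>1 (d x (v 0))))\<^sup>2) summable_on UNIV" by (rule inA_col[OF assms(3)])
      then have a: "(\<lambda>x. (norm (\<alpha>1 (d (v 0) x)))\<^sup>2) summable_on UNIV" by (simp add: d_sym)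
      have b: "(\<lambda>x. (norm (\<alpha>2 (d x (v n))))\<^sup>2) summable_on UNIV" by (rule inA_col[OF assms(4)])
      show ?thesis unfolding g_def[abs_def] by (rule prod_summable[OF a b])
    qed
    have pre: "\<tau> -` {(a, b)} = F a b" for a b by (auto simp: \<tau>_def F_def)
    have fin: "finite (\<tau> -` {k})" for k
    proof -
      obtain a b where k: "k = (a, b)" by (cases k)
      show ?thesis
      proof (cases "\<exists>j h. j \<le> n \<and> a = h + j \<and> b = h + n - j")
        case True
        then obtain j h where "j \<le> n" "a = h + j" "b = h + n - j" by blast
        then show ?thesis using pre F_eq prof_card k by simp
      next
        case False then show ?thesis using pre F_empty k by simp
      qed
    qed
    have gG: "g x = G (\<tau> x)" for x by (simp add: g_def G_def \<tau>_def d_sym)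
    have hs: "((\<lambda>k. of_nat (card (\<tau> -` {k})) * G k) has_sum infsum g UNIV) UNIV"
      by (rule fiber_sum[OF sg fin gG])
    have zero: "card (\<tau> -` {(a, b)}) = 0" if "\<not> (\<exists>j h. j \<le> n \<and> a = h + j \<and> b = h + n - j)" for a b
      using pre F_empty[OF that] by simp
    have val: "card (\<tau> -` {(h + j, h + n - j)}) = M n j h" if "j \<le> n" for j h
      using pre F_eq[OF that] prof_card[OF that] Y_card[OF that] by (simp add: M_def)
    have "infsum g UNIV = tree_conv E v \<alpha>1 \<alpha>2 n" by (simp add: tree_conv_def g_def[abs_def])
    then show ?thesis
      using main_sum[of "\<lambda>k. card (\<tau> -` {k})" G "infsum g UNIV" n "M n", OF hs zero val] by simp
  qed
  have Mend: "M n j l = \<kappa> ^ l" if "0 < n" "j = 0 \<or> j = n" for n j l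
    using that pow_helper[of l \<kappa>] by (auto simp: M_def)
  have Mmid0: "M n j 0 = 1" for n j by (simp add: M_def)
  have MmidS: "M n j (Suc l) = (\<kappa> - 1) * \<kappa> ^ l" if "0 < j" "j < n" for n j l
    using that by (simp add: M_def)
  have M00: "M 0 0 (Suc l) = (\<kappa> + 1) * \<kappa> ^ l" for l by (simp add: M_def)
  have c0: "tree_conv E v \<alpha>1 \<alpha>2 0 =
           \<alpha>1 0 * \<alpha>2 0 + (\<Sum>l. of_nat ((\<kappa> + 1) * \<kappa> ^ l) * \<alpha>1 (l + 1) * \<alpha>2 (l + 1))"
  proof -
    define f where "f l = of_nat (M 0 0 l) * G (l + 0, l + 0 - 0)" for l
    have "tree_conv E v \<alpha>1 \<alpha>2 0 = suminf f" "summable f" using key[of 0] by (simp_all add: f_def[abs_def])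
    then have "tree_conv E v \<alpha>1 \<alpha>2 0 = f 0 + (\<Sum>l. f (Suc l))" using split_head' by simp
    moreover have "f 0 = \<alpha>1 0 * \<alpha>2 0" by (simp add: f_def Mmid0 G_def)
    moreover have "(\<lambda>l. f (Suc l)) = (\<lambda>l. of_nat ((\<kappa> + 1) * \<kappa> ^ l) * \<alpha>1 (l + 1) * \<alpha>2 (l + 1))"
      by (simp add: fun_eq_iff f_def M00 G_def del: of_nat_mult)
    ultimately show ?thesis by simp
  qed
  have ends: "(\<Sum>l. of_nat (M n 0 l) * G (l + 0, l + n - 0)) + (\<Sum>l. of_nat (M n n l) * G (l + n, l + n - n))
      = (\<Sum>l. of_nat (\<kappa> ^ l) * (\<alpha>1 l * \<alpha>2 (l + n) + \<alpha>1 (l + n) * \<alpha>2 l))" if n: "0 < n" for n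
  proof -
    have s0: "summable (\<lambda>l. of_nat (M n 0 l) * G (l + 0, l + n - 0))"
      using conjunct2[OF key[of n], rule_format, of 0] by simp
    have sn: "summable (\<lambda>l. of_nat (M n n l) * G (l + n, l + n - n))"
      using conjunct2[OF key[of n], rule_format, of n] by simp
    have "(\<Sum>l. of_nat (M n 0 l) * G (l + 0, l + n - 0)) + (\<Sum>l. of_nat (M n n l) * G (l + n, l + n - n))
       = (\<Sum>l. of_nat (M n 0 l) * G (l + 0, l + n - 0) + of_nat (M n n l) * G (l + n, l + n - n))"
      using suminf_add[OF s0 sn] by simp
    also have "\<dots> = (\<Sum>l. of_nat (\<kappa> ^ l) * (\<alpha>1 l * \<alpha>2 (l + n) + \<alpha>1 (l + n) * \<alpha>2 l))"
      using Mend[OF n] by (simp add: G_def algebra_simps del: of_nat_power)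
    finally show ?thesis .
  qed
  have c1: "tree_conv E v \<alpha>1 \<alpha>2 1 =
           (\<Sum>l. of_nat (\<kappa> ^ l) * (\<alpha>1 l * \<alpha>2 (l + 1) + \<alpha>1 (l + 1) * \<alpha>2 l))"
  proof -
    have "tree_conv E v \<alpha>1 \<alpha>2 1 = (\<Sum>l. of_nat (M 1 0 l) * G (l + 0, l + 1 - 0)) + (\<Sum>l. of_nat (M 1 1 l) * G (l + 1, l + 1 - 1))"
      using key[of 1] by simp
    then show ?thesis using ends[of 1] by simp
  qed
  have c2: "tree_conv E v \<alpha>1 \<alpha>2 n =
           (\<Sum>l. of_nat (\<kappa> ^ l) * (\<alpha>1 l * \<alpha>2 (l + n) + \<alpha>1 (l + n) * \<alpha>2 l))
         + (\<Sum>i=1..n-1. \<alpha>1 i * \<alpha>2 (n - i))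
         + (\<Sum>i=1..n-1. (\<Sum>l. of_nat ((\<kappa> - 1) * \<kappa> ^ l) * \<alpha>1 (l + 1 + i) * \<alpha>2 (l + 1 + n - i)))"
    if n: "n \<ge> 2" for n
  proof -
    define T where "T j = (\<Sum>l. of_nat (M n j l) * G (l + j, l + n - j))" for j
    have "tree_conv E v \<alpha>1 \<alpha>2 n = (\<Sum>j\<le>n. T j)" using key[of n] by (simp add: T_def)
    also have "{..n} = insert 0 (insert n {1..n-1})" using n by auto
    then have "(\<Sum>j\<le>n. T j) = T 0 + T n + (\<Sum>i=1..n-1. T i)" using n by simp
    also have "T 0 + T n = (\<Sum>l. of_nat (\<kappa> ^ l) * (\<alpha>1 l * \<alpha>2 (l + n) + \<alpha>1 (l + n) * \<alpha>2 l))"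
      using ends[of n] n by (simp add: T_def)
    also have "(\<Sum>i=1..n-1. T i) = (\<Sum>i=1..n-1. \<alpha>1 i * \<alpha>2 (n - i) +
         (\<Sum>l. of_nat ((\<kappa> - 1) * \<kappa> ^ l) * \<alpha>1 (l + 1 + i) * \<alpha>2 (l + 1 + n - i)))"
    proof (rule sum.cong)
      fix i assume i: "i \<in> {1..n-1}"
      then have i0: "0 < i" "i < n" "i \<le> n" using n by auto
      define f where "f l = of_nat (M n i l) * G (l + i, l + n - i)" for l
      have "summable f" using conjunct2[OF key[of n], rule_format, of i] i0 by (simp add: f_def[abs_def])
      then have "T i = f 0 + (\<Sum>l. f (Suc l))" using split_head' by (simp add: T_def f_def[abs_def])
      moreover have "f 0 = \<alpha>1 i * \<alpha>2 (n - i)" by (simp add: f_def Mmid0 G_def)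
      moreover have "(\<lambda>l. f (Suc l)) = (\<lambda>l. of_nat ((\<kappa> - 1) * \<kappa> ^ l) * \<alpha>1 (l + 1 + i) * \<alpha>2 (l + 1 + n - i))"
        using i0 by (simp add: fun_eq_iff f_def MmidS G_def del: of_nat_mult)
      ultimately show "T i = \<alpha>1 i * \<alpha>2 (n - i) +
         (\<Sum>l. of_nat ((\<kappa> - 1) * \<kappa> ^ l) * \<alpha>1 (l + 1 + i) * \<alpha>2 (l + 1 + n - i))" by simp
    qed simp
    also have "\<dots> = (\<Sum>i=1..n-1. \<alpha>1 i * \<alpha>2 (n - i)) +
       (\<Sum>i=1..n-1. (\<Sum>l. of_nat ((\<kappa> - 1) * \<kappa> ^ l) * \<alpha>1 (l + 1 + i) * \<alpha>2 (l + 1 + n - i)))"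
      by (rule sum.distrib)
    finally show ?thesis by (simp add: add.assoc)
  qed
  show ?thesis using c0 c1 c2 by blast
qed

end
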